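(* Let $\psi$ be a saturation with saturation level $\alpha>0$ and $\mathbf{u}:[0,L]\to\mathbb{R}^P$ a given velocity. Fix $n$ and suppose $\boldsymbol{\rho}_i^n\ge0$ entry-wise and $\sigma_i^n\le\alpha$ for all $i=1,\dots,M$. If $(\boldsymbol{\rho}_i^{n+1})_{i=1}^M\subset\mathbb{R}^P$ satisfies the implicit scheme $$\frac{\boldsymbol{\rho}_i^{n+1}-\boldsymbol{\rho}_i^n}{\Delta t}+\frac{\mathbf{F}_{i+1/2}^{n+1}-\mathbf{F}_{i-1/2}^{n+1}}{\Delta x}=0,\quad \mathbf{F}_{i+1/2}^{n+1}=\mathrm{diag}(\boldsymbol{\rho}_i^{n+1})(\psi_{i+1}^{n+1})^+\mathbf{u}_{i+1/2}^++\mathrm{diag}(\boldsymbol{\rho}_{i+1}^{n+1})(\psi_i^{n+1})^+\mathbf{u}_{i+1/2}^-,$$ with $\psi_i^n=\psi(\sigma_i^n)$, $\sigma_i^n=\sum_{p=1}^P(\boldsymbol{\rho}_i^n)_p$, $\mathbf{u}_{i+1/2}=\mathbf{u}(x_{i+1/2})$, and no-flux boundary conditions $\mathbf{F}_{1/2}^{n+1}=\mathbf{F}_{M+1/2}^{n+1}=0$, then $\boldsymbol{\rho}_i^{n+1}\ge0$ entry-wise and $\sigma_i^{n+1}\le\alpha$ for all $i$, unconditionally (for any $\Delta t,\Delta x>0$).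
   Context: A saturation is a continuous function $\psi:[0,\infty)\to\mathbb{R}$ that is non-increasing and for which there is $\alpha>0$ (the saturation level) with $\psi(\alpha)=0$ and $(\alpha-s)\psi(s)>0$ for $s\neq\alpha$. Discretisation of $(0,L)$: $\Delta x=L/M$, cells with centres $x_i=\Delta x(i-1/2)$ and interfaces $x_{i+1/2}$; $\boldsymbol{\rho}_i^n\in\mathbb{R}^P$ is the vector of species densities on cell $i$ at time $t^n$. $\mathrm{diag}(\mathbf{v})$ is the diagonal matrix with the entries of $\mathbf{v}$; $(\cdot)^+=\max\{\cdot,0\}$ and $(\cdot)^-=\min\{\cdot,0\}$, applied entry-wise to vectors. (This is a scheme for $\partial_t\boldsymbol{\rho}+\partial_x(\mathrm{diag}(\boldsymbol{\rho})\psi(\sigma)\mathbf{u})=0$.) *)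

theory Defs
  imports Complex_Main
begin

text \<open>Saturation with saturation level alpha: psi defined on [0,infinity); as a
  HOL function real => real its values on negative arguments are arbitrary.\<close>
definition saturation :: "(real \<Rightarrow> real) \<Rightarrow> real \<Rightarrow> bool" where
  "saturation psi alpha \<longleftrightarrow>
     continuous_on {0..} psi \<and>
     (\<forall>s\<in>{0..}. \<forall>t\<in>{0..}. s \<le> t \<longrightarrow> psi t \<le> psi s) \<and>
     alpha > 0 \<and> psi alpha = 0 \<and>
     (\<forall>s\<in>{0..}. s \<noteq> alpha \<longrightarrow> (alpha - s) * psi s > 0)"

definition pospart :: "real \<Rightarrow> real" where "pospart x = max x 0"
definition negpart :: "real \<Rightarrow> real" where "negpart x = min x 0"

definition sigma :: "nat \<Rightarrow> (nat \<Rightarrow> real) \<Rightarrow> real" where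
  "sigma P r = (\<Sum>p\<in>{1..P}. r p)"

text \<open>Numerical flux at interface x_{j+1/2} = dx * j (j = 0..M), species p.
  Cells indexed by 1..M; rho i p is the density of species p in cell i.
  u x p is the p-th component of the velocity at x.\<close>
definition flux :: "(real \<Rightarrow> real) \<Rightarrow> (real \<Rightarrow> nat \<Rightarrow> real) \<Rightarrow> nat \<Rightarrow> nat \<Rightarrow> real
                    \<Rightarrow> (nat \<Rightarrow> nat \<Rightarrow> real) \<Rightarrow> nat \<Rightarrow> nat \<Rightarrow> real" where
  "flux psi u P M dx rho j p =
     (if j = 0 \<or> j = M then 0
      else rho j p * pospart (psi (sigma P (rho (j+1)))) * pospart (u (dx * real j) p)
         + rho (j+1) p * pospart (psi (sigma P (rho j))) * negpart (u (dx * real j) p))"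

end

theory Submission
  imports Defs
begin

lemma max_principle:
  fixes x y F :: "nat \<Rightarrow> real" and t dt dx :: real and M :: nat
  assumes dt: "dt > 0" and dx: "dx > 0"
    and F0: "F 0 = 0" and FM: "F M = 0"
    and yle: "\<forall>i\<in>{1..M}. y i \<le> t"
    and eq: "\<forall>i\<in>{1..M}. (x i - y i) / dt + (F i - F (i - 1)) / dx = 0"
    and s1: "\<forall>j\<in>{1..<M}. x j > t \<and> x (Suc j) \<le> t \<longrightarrow> F j \<ge> 0"
    and s2: "\<forall>j\<in>{1..<M}. x j \<le> t \<and> x (Suc j) > t \<longrightarrow> F j \<le> 0"
  shows "\<forall>i\<in>{1..M}. x i \<le> t"
proof (rule ccontr)
  assume "\<not> ?thesis"
  then obtain k where k: "k \<in> {1..M}" "x k > t" by auto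
  define s where "s i = (if x i > t then 1 else (0::real))" for i
  have tel: "(\<Sum>i=1..M. (s (Suc i) * F i - s i * F (i - 1))) = 0"
  proof -
    have "(\<Sum>i=1..M. (s (Suc i) * F i - s i * F (i - 1)))
        = (\<Sum>i=1..M. ((\<lambda>j. s (Suc j) * F j) i - (\<lambda>j. s (Suc j) * F j) (i - 1)))"
      by (rule sum.cong) auto
    also have "\<dots> = (\<Sum>i\<in>Suc ` {0..<M}. ((\<lambda>j. s (Suc j) * F j) i - (\<lambda>j. s (Suc j) * F j) (i - 1)))"
      by (simp add: image_Suc_atLeastLessThan atLeastLessThanSuc_atLeastAtMost)
    also have "\<dots> = (\<Sum>i<M. ((\<lambda>j. s (Suc j) * F j) (Suc i) - (\<lambda>j. s (Suc j) * F j) i))"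
      by (subst sum.reindex) (auto simp: lessThan_atLeast0)
    also have "\<dots> = 0" by (subst sum_lessThan_telescope) (simp add: F0 FM)
    finally show ?thesis .
  qed
  have pos: "\<forall>i\<in>{1..M}. (s i - s (Suc i)) * F i \<ge> 0"
  proof
    fix i assume i: "i \<in> {1..M}"
    show "(s i - s (Suc i)) * F i \<ge> 0"
    proof (cases "i = M")
      case True then show ?thesis using FM by simp
    next
      case False
      then have "i \<in> {1..<M}" using i by auto
      then show ?thesis using s1 s2 by (auto simp: s_def)
    qed
  qed
  have "(\<Sum>i=1..M. s i * (F i - F (i - 1)))
      = (\<Sum>i=1..M. (s i - s (Suc i)) * F i + (s (Suc i) * F i - s i * F (i - 1)))"
    by (rule sum.cong) (auto simp: algebra_simps)
  also have "\<dots> = (\<Sum>i=1..M. (s i - s (Suc i)) * F i)"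
    unfolding sum.distrib tel by simp
  also have "\<dots> \<ge> 0" using pos by (intro sum_nonneg) auto
  finally have A: "(\<Sum>i=1..M. s i * (F i - F (i - 1))) \<ge> 0" .
  have B: "\<forall>i\<in>{1..M}. s i * (x i - y i) = - (dt / dx) * (s i * (F i - F (i - 1)))"
  proof
    fix i assume i: "i \<in> {1..M}"
    have "x i - y i = - (dt / dx) * (F i - F (i - 1))"
      using eq i dt dx by (auto simp: field_simps)
    then show "s i * (x i - y i) = - (dt / dx) * (s i * (F i - F (i - 1)))" by simp
  qed
  have "(\<Sum>i=1..M. s i * (x i - y i)) = - (dt / dx) * (\<Sum>i=1..M. s i * (F i - F (i - 1)))"
    using B by (simp add: sum_distrib_left)
  also have "\<dots> \<le> 0" using A dt dx by (simp add: mult_nonneg_nonneg)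
  finally have C: "(\<Sum>i=1..M. s i * (x i - y i)) \<le> 0" .
  have nn: "\<forall>i\<in>{1..M}. s i * (x i - y i) \<ge> 0" using yle by (auto simp: s_def)
  have "(\<Sum>i=1..M. s i * (x i - y i)) > 0"
  proof (rule sum_pos2[of "{1..M}" k])
    have "y k \<le> t" using k yle by blast
    then show "0 < s k * (x k - y k)" using k by (auto simp: s_def)
  qed (use k nn in auto)
  then show False using C by simp
qed

theorem proposition3p4:
  fixes psi :: "real \<Rightarrow> real" and alpha L dt :: real and M P :: nat
    and u :: "real \<Rightarrow> nat \<Rightarrow> real"
    and rho_n rho_n1 :: "nat \<Rightarrow> nat \<Rightarrow> real"
  assumes sat: "saturation psi alpha"
    and L: "L > 0" and M: "M \<ge> 1" and dt: "dt > 0"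
    and nonneg: "\<forall>i\<in>{1..M}. \<forall>p\<in>{1..P}. rho_n i p \<ge> 0"
    and below: "\<forall>i\<in>{1..M}. sigma P (rho_n i) \<le> alpha"
    and scheme: "\<forall>i\<in>{1..M}. \<forall>p\<in>{1..P}.
        (rho_n1 i p - rho_n i p) / dt
        + (flux psi u P M (L / real M) rho_n1 i p - flux psi u P M (L / real M) rho_n1 (i - 1) p)
          / (L / real M) = 0"
  shows "(\<forall>i\<in>{1..M}. \<forall>p\<in>{1..P}. rho_n1 i p \<ge> 0) \<and> (\<forall>i\<in>{1..M}. sigma P (rho_n1 i) \<le> alpha)"
proof -
  define dx where "dx = L / real M"
  have dx: "dx > 0" using L M by (simp add: dx_def)
  define fl where "fl = flux psi u P M dx rho_n1"
  have fl_eq: "fl j p = (if j = 0 \<or> j = M then 0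
      else rho_n1 j p * (pospart (psi (sigma P (rho_n1 (j+1)))) * pospart (u (dx * real j) p))
         + rho_n1 (j+1) p * (pospart (psi (sigma P (rho_n1 j))) * negpart (u (dx * real j) p)))" for j p
    by (simp add: fl_def flux_def mult.assoc)
  have pp: "pospart z \<ge> 0" for z by (simp add: pospart_def)
  have np: "negpart z \<le> 0" for z by (simp add: negpart_def)
  have sch: "\<forall>i\<in>{1..M}. \<forall>p\<in>{1..P}. (rho_n1 i p - rho_n i p) / dt + (fl i p - fl (i - 1) p) / dx = 0"
    using scheme by (simp add: fl_def dx_def)
  have P1: "\<forall>i\<in>{1..M}. \<forall>p\<in>{1..P}. rho_n1 i p \<ge> 0"
  proof
    fix i assume i: "i \<in> {1..M}"
    show "\<forall>p\<in>{1..P}. rho_n1 i p \<ge> 0"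
    proof
      fix p assume p: "p \<in> {1..P}"
      have "\<forall>i\<in>{1..M}. (\<lambda>i. - rho_n1 i p) i \<le> 0"
      proof (rule max_principle[where y="\<lambda>i. - rho_n i p" and F="\<lambda>j. - fl j p" and dt=dt and dx=dx])
        show "\<forall>i\<in>{1..M}. ((- rho_n1 i p) - (- rho_n i p)) / dt + ((- fl i p) - (- fl (i - 1) p)) / dx = 0"
        proof
          fix i assume "i \<in> {1..M}"
          then have "(rho_n1 i p - rho_n i p) / dt + (fl i p - fl (i - 1) p) / dx = 0" using sch p by auto
          then show "((- rho_n1 i p) - (- rho_n i p)) / dt + ((- fl i p) - (- fl (i - 1) p)) / dx = 0"
            by (simp add: diff_divide_distrib)
        qed
        show "\<forall>j\<in>{1..<M}. - rho_n1 j p > 0 \<and> - rho_n1 (Suc j) p \<le> 0 \<longrightarrow> - fl j p \<ge> 0"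
        proof (intro ballI impI)
          fix j assume j: "j \<in> {1..<M}" and h: "- rho_n1 j p > 0 \<and> - rho_n1 (Suc j) p \<le> 0"
          have "rho_n1 j p * (pospart (psi (sigma P (rho_n1 (j+1)))) * pospart (u (dx * real j) p)) \<le> 0"
            using h by (intro mult_nonpos_nonneg) (auto intro: mult_nonneg_nonneg pp)
          moreover have "rho_n1 (j+1) p * (pospart (psi (sigma P (rho_n1 j))) * negpart (u (dx * real j) p)) \<le> 0"
            using h by (intro mult_nonneg_nonpos) (auto intro: mult_nonneg_nonpos pp np)
          ultimately show "- fl j p \<ge> 0" using j by (simp add: fl_eq)
        qed
        show "\<forall>j\<in>{1..<M}. - rho_n1 j p \<le> 0 \<and> - rho_n1 (Suc j) p > 0 \<longrightarrow> - fl j p \<le> 0"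
        proof (intro ballI impI)
          fix j assume j: "j \<in> {1..<M}" and h: "- rho_n1 j p \<le> 0 \<and> - rho_n1 (Suc j) p > 0"
          have "rho_n1 j p * (pospart (psi (sigma P (rho_n1 (j+1)))) * pospart (u (dx * real j) p)) \<ge> 0"
            using h by (intro mult_nonneg_nonneg) (auto intro: mult_nonneg_nonneg pp)
          moreover have "rho_n1 (j+1) p * (pospart (psi (sigma P (rho_n1 j))) * negpart (u (dx * real j) p)) \<ge> 0"
            using h by (intro mult_nonpos_nonpos) (auto intro: mult_nonneg_nonpos pp np)
          ultimately show "- fl j p \<le> 0" using j by (simp add: fl_eq)
        qed
      qed (use dt dx nonneg p in \<open>auto simp: fl_eq\<close>)
      then show "rho_n1 i p \<ge> 0" using i by auto
    qed
  qed
  define G where "G j = (\<Sum>p\<in>{1..P}. fl j p)" for j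
  have "\<forall>i\<in>{1..M}. sigma P (rho_n1 i) \<le> alpha"
  proof (rule max_principle[where y="\<lambda>i. sigma P (rho_n i)" and F=G and dt=dt and dx=dx])
    show "\<forall>i\<in>{1..M}. (sigma P (rho_n1 i) - sigma P (rho_n i)) / dt + (G i - G (i - 1)) / dx = 0"
    proof
      fix i assume i: "i \<in> {1..M}"
      have h0: "(\<Sum>p\<in>{1..P}. (rho_n1 i p - rho_n i p) / dt + (fl i p - fl (i - 1) p) / dx) = 0"
        using sch i by simp
      show "(sigma P (rho_n1 i) - sigma P (rho_n i)) / dt + (G i - G (i - 1)) / dx = 0"
      proof -
        have e1: "(\<Sum>p\<in>{1..P}. (rho_n1 i p - rho_n i p) / dt) = (sigma P (rho_n1 i) - sigma P (rho_n i)) / dt"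
          unfolding sigma_def sum_subtractf[symmetric] sum_divide_distrib by (rule refl)
        have e2: "(\<Sum>p\<in>{1..P}. (fl i p - fl (i - 1) p) / dx) = (G i - G (i - 1)) / dx"
          unfolding G_def sum_subtractf[symmetric] sum_divide_distrib by (rule refl)
        show ?thesis using e1 e2 h0 sum.distrib[of "\<lambda>p. (rho_n1 i p - rho_n i p) / dt" "\<lambda>p. (fl i p - fl (i - 1) p) / dx" "{1..P}"]
          by linarith
      qed
    qed
    have sat': "s \<ge> 0 \<Longrightarrow> s \<noteq> alpha \<Longrightarrow> (alpha - s) * psi s > 0" for s
      using sat by (auto simp: saturation_def)
    have apos: "alpha > 0" using sat by (auto simp: saturation_def)
    have neg: "s > alpha \<Longrightarrow> pospart (psi s) = 0" for s
    proof -
      assume "s > alpha"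
      with sat'[of s] apos have "(alpha - s) * psi s > 0" "alpha - s < 0" by auto
      then have "psi s < 0" by (auto simp: zero_less_mult_iff)
      then show ?thesis by (simp add: pospart_def)
    qed
    show "\<forall>j\<in>{1..<M}. sigma P (rho_n1 j) > alpha \<and> sigma P (rho_n1 (Suc j)) \<le> alpha \<longrightarrow> G j \<ge> 0"
    proof (intro ballI impI)
      fix j assume j: "j \<in> {1..<M}" and h: "sigma P (rho_n1 j) > alpha \<and> sigma P (rho_n1 (Suc j)) \<le> alpha"
      have "fl j p \<ge> 0" if p: "p \<in> {1..P}" for p
      proof -
        have "rho_n1 j p \<ge> 0" using P1 j p by auto
        then show ?thesis using j h neg[of "sigma P (rho_n1 j)"]
          by (simp add: fl_eq mult_nonneg_nonneg pp)
      qed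
      then show "G j \<ge> 0" unfolding G_def by (intro sum_nonneg) auto
    qed
    show "\<forall>j\<in>{1..<M}. sigma P (rho_n1 j) \<le> alpha \<and> sigma P (rho_n1 (Suc j)) > alpha \<longrightarrow> G j \<le> 0"
    proof (intro ballI impI)
      fix j assume j: "j \<in> {1..<M}" and h: "sigma P (rho_n1 j) \<le> alpha \<and> sigma P (rho_n1 (Suc j)) > alpha"
      have "fl j p \<le> 0" if p: "p \<in> {1..P}" for p
      proof -
        have "rho_n1 (Suc j) p \<ge> 0" using P1 j p by auto
        then show ?thesis using j h neg[of "sigma P (rho_n1 (Suc j))"]
          by (simp add: fl_eq mult_nonneg_nonpos pp np)
      qed
      then show "G j \<le> 0" unfolding G_def by (intro sum_nonpos) auto
    qed
    show "G 0 = 0" unfolding G_def by (simp add: fl_eq)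
    show "G M = 0" unfolding G_def by (simp add: fl_eq)
  qed (use dt dx below in auto)
  with P1 show ?thesis by blast
qed

end
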